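(* Let $R$ and $S$ be finite fields. If $\Gamma(Tr(R))\cong\Gamma(Tr(S))$ as graphs, then $R\cong S$.
   Context: For a noncommutative ring $A$ with identity and center $Z(A)$, the commuting graph $\Gamma(A)$ is the simple graph with vertex set $A\setminus Z(A)$, in which two distinct vertices $a,b$ are adjacent iff $ab=ba$. $Tr(R)$ denotes the ring of all $2\times 2$ upper triangular matrices over $R$. *)

theory Defs
  imports "HOL-Analysis.Finite_Cartesian_Product" "HOL-Library.Numeral_Type"
begin

text \<open>The ring Tr(R) of 2x2 upper triangular matrices over R, as a subset of all 2x2 matrices
  (rows/columns indexed by the type 2, entry (2,1) is the lower-left entry).\<close>
definition upper_tri :: "(('a::comm_ring_1) ^ 2 ^ 2) set" where
  "upper_tri = {M. M $ 2 $ 1 = 0}"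

definition ring_center :: "(('a::comm_ring_1) ^ 2 ^ 2) set \<Rightarrow> ('a ^ 2 ^ 2) set" where
  "ring_center A = {a \<in> A. \<forall>b \<in> A. a ** b = b ** a}"

definition cg_vertices :: "(('a::comm_ring_1) ^ 2 ^ 2) set \<Rightarrow> ('a ^ 2 ^ 2) set" where
  "cg_vertices A = A - ring_center A"

definition cg_adj :: "(('a::comm_ring_1) ^ 2 ^ 2) set \<Rightarrow> 'a ^ 2 ^ 2 \<Rightarrow> 'a ^ 2 ^ 2 \<Rightarrow> bool" where
  "cg_adj A x y \<longleftrightarrow> x \<in> cg_vertices A \<and> y \<in> cg_vertices A \<and> x \<noteq> y \<and> x ** y = y ** x"

definition commuting_graph_iso ::
  "(('a::comm_ring_1) ^ 2 ^ 2) set \<Rightarrow> (('b::comm_ring_1) ^ 2 ^ 2) set \<Rightarrow> bool" where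
  "commuting_graph_iso A B \<longleftrightarrow>
     (\<exists>f. bij_betw f (cg_vertices A) (cg_vertices B) \<and>
          (\<forall>x \<in> cg_vertices A. \<forall>y \<in> cg_vertices A. cg_adj A x y \<longleftrightarrow> cg_adj B (f x) (f y)))"

definition ring_isomorphic :: "'a::ring_1 itself \<Rightarrow> 'b::ring_1 itself \<Rightarrow> bool" where
  "ring_isomorphic _ _ \<longleftrightarrow>
     (\<exists>f :: 'a \<Rightarrow> 'b. bij f \<and> (\<forall>x y. f (x + y) = f x + f y) \<and> (\<forall>x y. f (x * y) = f x * f y)
        \<and> f 1 = 1)"

end

theory Submission
  imports Defs "HOL-Analysis.Cartesian_Space" "HOL-Algebra.Multiplicative_Group" "HOL-Number_Theory.Residues"
    "HOL-Computational_Algebra.Primes" "HOL-Computational_Algebra.Polynomial"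
begin

definition mkm :: "'a::comm_ring_1 \<Rightarrow> 'a \<Rightarrow> 'a \<Rightarrow> 'a^2^2" where
  "mkm a b d = (\<chi> i j. if i = 1 then (if j = 1 then a else b) else (if j = 1 then 0 else d))"

lemma mkm_nth: "mkm a b d $ 1 $ 1 = a" "mkm a b d $ 1 $ 2 = b" "mkm a b d $ 2 $ 1 = 0" "mkm a b d $ 2 $ 2 = d"
  by (simp_all add: mkm_def)

lemma mkm_eq_iff: "mkm a b d = mkm a' b' d' \<longleftrightarrow> a = a' \<and> b = b' \<and> d = d'"
  by (simp add: mkm_def vec_eq_iff forall_2)

lemma mkm_mult: "mkm a b d ** mkm a' b' d' = mkm (a*a') (a*b' + b*d') (d*d')"
  unfolding matrix_matrix_mult_def
  by (simp add: vec_eq_iff forall_2 sum_2 mkm_nth)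

lemma upper_tri_eq: "(upper_tri :: (('a::comm_ring_1)^2^2) set) = (\<lambda>(a,b,d). mkm a b d) ` UNIV"
proof (intro Set.set_eqI HOL.iffI)
  fix M :: "'a^2^2" assume "M \<in> upper_tri"
  hence "M = mkm (M$1$1) (M$1$2) (M$2$2)"
    by (simp add: upper_tri_def vec_eq_iff forall_2 mkm_nth)
  thus "M \<in> (\<lambda>(a,b,d). mkm a b d) ` UNIV" by (auto intro!: image_eqI[of _ _ "(M$1$1, M$1$2, M$2$2)"])
qed (auto simp: upper_tri_def mkm_nth)

lemma card_upper_tri: "card (upper_tri :: (('a::{comm_ring_1,finite})^2^2) set) = CARD('a)^3"
proof -
  have "inj (\<lambda>(a::'a,b::'a,d::'a). mkm a b d)"
    by (auto simp: inj_def mkm_eq_iff)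
  hence "card (upper_tri :: ('a^2^2) set) = card (UNIV :: ('a*'a*'a) set)"
    by (simp add: upper_tri_eq card_image)
  thus ?thesis by (simp add: UNIV_Times_UNIV[symmetric] card_cartesian_product power3_eq_cube del: UNIV_Times_UNIV)
qed

lemma center_eq: "ring_center (upper_tri :: (('a::comm_ring_1)^2^2) set) = (\<lambda>c. mkm c 0 c) ` UNIV"
proof (intro Set.set_eqI HOL.iffI)
  fix M :: "'a^2^2" assume M: "M \<in> ring_center upper_tri"
  then obtain a b d where Md: "M = mkm a b d" by (auto simp: ring_center_def upper_tri_eq)
  have "M ** mkm 1 0 0 = mkm 1 0 0 ** M" "M ** mkm 0 1 0 = mkm 0 1 0 ** M"
    using M by (auto simp: ring_center_def upper_tri_eq)
  hence "b = 0" "a = d" by (simp_all add: Md mkm_mult mkm_eq_iff)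
  thus "M \<in> (\<lambda>c. mkm c 0 c) ` UNIV" using Md by auto
next
  fix M :: "'a^2^2" assume "M \<in> (\<lambda>c. mkm c 0 c) ` UNIV"
  then obtain c where "M = mkm c 0 c" by auto
  moreover have "M \<in> upper_tri" using \<open>M = mkm c 0 c\<close> by (simp add: upper_tri_def mkm_nth)
  ultimately show "M \<in> ring_center upper_tri"
    by (auto simp: ring_center_def upper_tri_eq mkm_mult mkm_eq_iff algebra_simps)
qed

lemma card_vertices: "card (cg_vertices (upper_tri :: (('a::{comm_ring_1,finite})^2^2) set)) = CARD('a)^3 - CARD('a)"
proof -
  have "inj (\<lambda>c::'a. mkm c 0 c)" by (auto simp: inj_def mkm_eq_iff)
  hence c: "card (ring_center (upper_tri :: ('a^2^2) set)) = CARD('a)"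
    by (simp add: center_eq card_image)
  have "ring_center (upper_tri :: ('a^2^2) set) \<subseteq> upper_tri" by (auto simp: ring_center_def)
  thus ?thesis unfolding cg_vertices_def
    by (simp add: card_Diff_subset c card_upper_tri finite_subset)
qed

lemma cube_inj:
  fixes q q' :: nat assumes "q \<ge> 1" "q' \<ge> 1" "q^3 - q = q'^3 - q'" shows "q = q'"
proof -
  have m: "q < r \<Longrightarrow> 1 \<le> q \<Longrightarrow> q^3 - q < r^3 - r" for q r :: nat
  proof -
    assume "q < r" "1 \<le> q"
    hence "Suc q \<le> r" by simp
    have "q \<le> q^3" using \<open>1 \<le> q\<close> by (simp add: power3_eq_cube)
    have "r \<le> r^3" using \<open>1 \<le> q\<close> \<open>q<r\<close> by (simp add: power3_eq_cube)
    have "q^3 < r^3" using \<open>q<r\<close> by (simp add: power_strict_mono)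
    have "int (q^3 - q) = int q ^3 - int q" using \<open>q \<le> q^3\<close> by (simp add: of_nat_diff)
    moreover have "int (r^3 - r) = int r ^3 - int r" using \<open>r \<le> r^3\<close> by (simp add: of_nat_diff)
    moreover have "int q ^3 - int q < int r ^3 - int r"
    proof -
      have "int r ^ 3 - int r - (int q ^3 - int q) = (int r - int q) * (int r^2 + int r * int q + int q^2 - 1)"
        by (simp add: algebra_simps power2_eq_square power3_eq_cube)
      moreover have "int r - int q > 0" using \<open>q<r\<close> by simp
      moreover have "int r^2 + int r * int q + int q^2 - 1 > 0"
      proof -
        have "int q^2 \<ge> 1" using \<open>1 \<le> q\<close> by (simp add: one_le_power)
        moreover have "int r^2 \<ge> 1" using \<open>1 \<le> q\<close> \<open>q<r\<close> by (simp add: one_le_power)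
        moreover have "int r * int q \<ge> 0" by simp
        ultimately show ?thesis by linarith
      qed
      ultimately show ?thesis by (metis diff_gt_0_iff_gt mult_pos_pos)
    qed
    ultimately show ?thesis by linarith
  qed
  show ?thesis using m[of q q'] m[of q' q] assms by (metis nat_neq_iff)
qed


lemma mpi_add: "map_poly (of_int :: int \<Rightarrow> 'a::comm_ring_1) (f + g) = map_poly of_int f + map_poly of_int g"
  by (rule poly_eqI) (simp add: coeff_map_poly)

lemma mpi_diff: "map_poly (of_int :: int \<Rightarrow> 'a::comm_ring_1) (f - g) = map_poly of_int f - map_poly of_int g"
  by (rule poly_eqI) (simp add: coeff_map_poly)

lemma mpi_mult: "map_poly (of_int :: int \<Rightarrow> 'a::comm_ring_1) (f * g) = map_poly of_int f * map_poly of_int g"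
proof (induction f rule: pCons_induct)
  case 0 then show ?case by simp
next
  case (pCons a f)
  have "map_poly (of_int :: int \<Rightarrow> 'a) (pCons a f * g) = map_poly of_int (smult a g + pCons 0 (f * g))"
    by simp
  also have "\<dots> = smult (of_int a) (map_poly of_int g) + pCons 0 (map_poly of_int (f * g))"
    by (simp add: mpi_add map_poly_smult map_poly_pCons)
  also have "\<dots> = map_poly of_int (pCons a f) * map_poly (of_int :: int \<Rightarrow> 'a) g"
    by (simp add: pCons.IH map_poly_pCons)
  finally show ?case .
qed

lemma mpi_1: "map_poly (of_int :: int \<Rightarrow> 'a::comm_ring_1) 1 = 1"
  by simp

lemma mpi_monom: "map_poly (of_int :: int \<Rightarrow> 'a::comm_ring_1) (monom c n) = monom (of_int c) n"
  by (simp add: map_poly_monom)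

lemma poly_sum_N:
  fixes p :: "'a::comm_ring_1 poly"
  assumes "degree p \<le> N"
  shows "poly p x = (\<Sum>i\<le>N. coeff p i * x ^ i)"
proof -
  have "poly p x = poly (\<Sum>i\<le>N. monom (coeff p i) i) x"
    by (simp only: poly_as_sum_of_monoms'[OF assms])
  also have "\<dots> = (\<Sum>i\<le>N. coeff p i * x ^ i)"
    by (simp add: poly_sum poly_monom)
  finally show ?thesis .
qed

lemma coeff_mpi: "coeff (map_poly (of_int :: int \<Rightarrow> 'a::comm_ring_1) g) i = of_int (coeff g i)"
  by (simp add: coeff_map_poly)

lemma degree_mpi_le: "degree (map_poly (of_int :: int \<Rightarrow> 'a::comm_ring_1) g) \<le> degree g"
  by (rule degree_le) (simp add: coeff_map_poly coeff_eq_0)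

lemma ff_pow_card:
  fixes x :: "'a :: {field,finite}"
  shows   "x ^ card (UNIV :: 'a set) = x"
proof (cases "x = 0")
  case False
  have "x * (\<Prod>y\<in>UNIV-{0}. x * y) = x * x ^ (card (UNIV :: 'a set) - 1) * \<Prod>(UNIV-{0})"
    by (simp add: prod.distrib mult_ac)
  also have "x * x ^ (card (UNIV :: 'a set) - 1) = x ^ Suc (card (UNIV :: 'a set) - 1)"
    by (subst power_Suc) auto
  also have "Suc (card (UNIV :: 'a set) - 1) = card (UNIV :: 'a set)"
    using finite_UNIV_card_ge_0[where ?'a = 'a] by simp
  also have "(\<Prod>y\<in>UNIV-{0}. x * y) = (\<Prod>y\<in>UNIV-{0}. y)"
    by (rule prod.reindex_bij_witness[of _ "\<lambda>y. y / x" "\<lambda>y. x * y"]) (use False in auto)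
  finally show ?thesis
    by simp
qed (use finite_UNIV_card_ge_0[where ?'a = 'a] in auto)

lemma card_ge2: "card (UNIV :: 'a::{field,finite} set) \<ge> 2"
proof -
  have "{0, 1::'a} \<subseteq> UNIV" by simp
  hence "card {0,1::'a} \<le> card (UNIV :: 'a set)" by (intro card_mono) auto
  thus ?thesis by simp
qed

lemma ff_inverse_pow:
  fixes x :: "'a :: {field,finite}"
  assumes "x \<noteq> 0" shows "inverse x = x ^ (card (UNIV :: 'a set) - 2)"
proof -
  obtain k where k: "card (UNIV :: 'a set) = Suc (Suc k)"
    using card_ge2[where 'a='a] by (metis add_2_eq_Suc le_Suc_ex)
  have "x * x ^ (card (UNIV :: 'a set) - 2) * x = x ^ card (UNIV :: 'a set)"
    unfolding k by (simp add: mult_ac)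
  hence "x * x ^ (card (UNIV :: 'a set) - 2) = 1" using assms ff_pow_card[of x]
    by (metis mult_cancel_right1)
  thus ?thesis using assms by (simp add: field_simps)
qed

lemma ff_char_prime: "prime (semiring_char TYPE('a::{field,finite}))"
  using prime_CHAR_semidom[where ?'a = 'a] finite_imp_CHAR_pos[where 'a='a] by auto

lemma of_nat_mod_char: "(of_nat (n mod semiring_char TYPE('a)) :: 'a::comm_ring_1) = of_nat n"
proof -
  have "(of_nat n :: 'a) = of_nat (n mod CHAR('a) + CHAR('a) * (n div CHAR('a)))"
    by simp
  also have "\<dots> = of_nat (n mod CHAR('a)) + of_nat CHAR('a) * of_nat (n div CHAR('a))"
    by (simp only: of_nat_add of_nat_mult)
  also have "\<dots> = of_nat (n mod CHAR('a))" by simp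
  finally show ?thesis by simp
qed

lemma ff_card_char_power: "\<exists>k. card (UNIV::'a::{field,finite} set) = semiring_char TYPE('a) ^ k"
proof -
  define p where "p = CHAR('a)"
  have pp: "prime p" unfolding p_def by (rule ff_char_prime)
  hence p1: "p > 1" by (rule prime_gt_1_nat)
  have p0: "(of_nat p :: 'a) = 0" by (simp add: p_def)
  define cl where "cl H \<longleftrightarrow> (0::'a) \<in> H \<and> (\<forall>x\<in>H. \<forall>y\<in>H. x+y \<in> H)" for H
  have scal: "of_nat n * h \<in> H" if "cl H" "h \<in> H" for H h n
    using that by (induction n) (auto simp: cl_def algebra_simps)
  have neg: "of_nat (p - 1) * h + h = 0" for h :: 'a
  proof -
    have "of_nat (p - 1) * h + h = of_nat (p - 1 + 1) * h" by (simp add: algebra_simps)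
    also have "p - 1 + 1 = p" using p1 by simp
    finally show ?thesis using p0 by simp
  qed
  have invn: "\<exists>m. inverse (of_nat n :: 'a) = of_nat m" if "(of_nat n :: 'a) \<noteq> 0" for n
    using ff_inverse_pow[OF that] by (intro exI[of _ "n ^ (card (UNIV::'a set) - 2)"]) (simp add: of_nat_power)
  have main: "\<exists>H k. A \<subseteq> H \<and> cl H \<and> card H = p ^ k" if "finite A" for A :: "'a set"
    using that
  proof (induction A rule: finite_induct)
    case empty
    show ?case by (intro exI[of _ "{0}"] exI[of _ 0]) (auto simp: cl_def)
  next
    case (insert x A)
    then obtain H k where H: "A \<subseteq> H" "cl H" "card H = p ^ k" by blast
    show ?case
    proof (cases "x \<in> H")
      case True thus ?thesis using H by blast
    next
      case False
      define f where "f = (\<lambda>(h, i). h + of_nat i * x)"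
      define H' where "H' = f ` (H \<times> {..<p})"
      have noeq: "False" if "h \<in> H" "h' \<in> H" "i < j" "j < p" "h + of_nat i * x = h' + of_nat j * x" for h h' i j
      proof -
        have eq1: "of_nat (j - i) * x = h + of_nat (p - 1) * h'"
        proof -
          have "of_nat (j - i) * x = of_nat j * x - of_nat i * x" using \<open>i < j\<close>
            by (simp add: of_nat_diff algebra_simps)
          also have "\<dots> = h - h'" using that(5) by (simp add: algebra_simps)
          also have "\<dots> = h + of_nat (p - 1) * h'"
          proof -
            have "of_nat (p - 1) * h' = - h'" using neg[of h'] by (simp add: eq_neg_iff_add_eq_0)
            thus ?thesis by simp
          qed
          finally show ?thesis .
        qed
        have nz: "(of_nat (j - i) :: 'a) \<noteq> 0"
          unfolding of_nat_eq_0_iff_char_dvd p_def[symmetric] using that(3,4)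
          by (auto dest: dvd_imp_le)
        then obtain m where m: "inverse (of_nat (j - i) :: 'a) = of_nat m" using invn by blast
        have "x = inverse (of_nat (j - i)) * (of_nat (j - i) * x)" using nz by simp
        also have "\<dots> = of_nat m * (h + of_nat (p - 1) * h')" using eq1 m by simp
        finally have "x = of_nat m * (h + of_nat (p - 1) * h')" .
        moreover have "of_nat m * (h + of_nat (p - 1) * h') \<in> H"
          using H(2) that(1,2) scal by (auto simp: cl_def)
        ultimately show False using False by simp
      qed
      have inj: "inj_on f (H \<times> {..<p})"
      proof (rule inj_onI, clarsimp simp: f_def)
        fix h i h' j assume a: "h \<in> H" "i < p" "h' \<in> H" "j < p" "h + of_nat i * x = h' + of_nat j * x"
        have "i = j" using noeq[of h h' i j] noeq[of h' h j i] a by (cases i j rule: linorder_cases) auto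
        thus "h = h' \<and> i = j" using a(5) by simp
      qed
      have finH: "finite H" by simp
      have "card H' = card H * p" unfolding H'_def using card_image[OF inj] finH
        by (simp add: card_cartesian_product)
      hence cH': "card H' = p ^ Suc k" using H(3) by (simp add: mult.commute)
      have subs: "insert x A \<subseteq> H'"
      proof -
        have "x = f (0, 1)" by (simp add: f_def)
        moreover have "0 \<in> H" using H(2) by (simp add: cl_def)
        ultimately have "x \<in> H'" unfolding H'_def using p1 by (intro image_eqI[of _ _ "(0,1)"]) auto
        moreover have "a \<in> H'" if "a \<in> A" for a
        proof -
          have "a = f (a, 0)" by (simp add: f_def)
          thus ?thesis unfolding H'_def using that H(1) p1 by (intro image_eqI[of _ _ "(a,0)"]) auto
        qed
        ultimately show ?thesis by blast
      qed
      have clH': "cl H'"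
      proof -
        have "0 \<in> H'" unfolding H'_def using H(2) p1
          by (auto simp: cl_def f_def intro!: image_eqI[of _ _ "(0,0)"])
        moreover have "u + v \<in> H'" if uH: "u \<in> H'" and vH: "v \<in> H'" for u v
        proof -
          obtain z where z: "z \<in> H \<times> {..<p}" "u = f z" using uH unfolding H'_def by (rule imageE)
          obtain h i where hi: "h \<in> H" "i < p" "u = h + of_nat i * x" using z by (cases z) (auto simp: f_def)
          obtain z' where z': "z' \<in> H \<times> {..<p}" "v = f z'" using vH unfolding H'_def by (rule imageE)
          obtain h' j where hj: "h' \<in> H" "j < p" "v = h' + of_nat j * x" using z' by (cases z') (auto simp: f_def)
          have "u + v = (h + h') + of_nat ((i + j) mod p) * x"
            using hi hj of_nat_mod_char[of "i+j", where 'a='a] unfolding p_def by (simp add: algebra_simps)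
          moreover have "h + h' \<in> H" using H(2) hi hj by (simp add: cl_def)
          moreover have "(i + j) mod p < p" using p1 by simp
          ultimately show ?thesis unfolding H'_def
            by (intro image_eqI[of _ _ "(h + h', (i + j) mod p)"]) (auto simp: f_def)
        qed
        ultimately show ?thesis by (simp add: cl_def)
      qed
      show ?thesis using subs clH' cH' by blast
    qed
  qed
  from main[OF finite_class.finite_UNIV] obtain H k where H: "UNIV \<subseteq> H" "cl H" "card H = p ^ k" by (elim exE conjE)
  have "H = UNIV" using H(1) by (rule top_le)
  hence "card (UNIV :: 'a set) = p ^ k" using H(3) by simp
  thus ?thesis unfolding p_def by (rule exI)
qed

lemma ff_char_eq:
  assumes "card (UNIV :: 'r::{field,finite} set) = card (UNIV :: 's::{field,finite} set)"
  shows "semiring_char TYPE('r) = semiring_char TYPE('s)"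
proof -
  obtain k where k: "card (UNIV :: 'r set) = CHAR('r) ^ k" using ff_card_char_power by blast
  have "CHAR('s) dvd CHAR('r) ^ k" using CHAR_dvd_CARD[where 'a='s] assms k by simp
  hence "CHAR('s) dvd CHAR('r)" using ff_char_prime[where 'a='s] prime_dvd_power by blast
  from primes_dvd_imp_eq[OF ff_char_prime[where 'a='s] ff_char_prime[where 'a='r] this]
  show ?thesis by simp
qed

lemma ff_gen: "\<exists>a::'a::{field,finite}. \<forall>x. x \<noteq> 0 \<longrightarrow> (\<exists>i. x = a ^ i)"
proof -
  define K where "K = (\<lparr>carrier = UNIV, monoid.mult = (\<lambda>x y. x * y), one = 1, zero = 0, add = (\<lambda>x y. x + y)\<rparr> :: 'a ring)"
  have fK: "field K"
  proof -
    have "\<exists>y. x + y = 0" for x :: 'a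
      using add.right_inverse by blast
    moreover have "x \<noteq> 0 \<Longrightarrow> \<exists>y. x * y = 1" for x :: 'a
      by (rule exI[of _ "inverse x"]) auto
    ultimately show ?thesis
      unfolding K_def using add.right_inverse
      by unfold_locales (auto simp:algebra_simps Units_def)
  qed
  have finK: "finite (carrier K)" by (simp add: K_def)
  have "\<exists>a\<in>carrier (mult_of K). carrier (mult_of K) = {a [^]\<^bsub>K\<^esub> i | i::nat. i \<in> UNIV}"
    by (rule field.finite_field_mult_group_has_gen[OF fK finK])
  then obtain a where a1: "a \<in> carrier (mult_of K)"
    and a2: "carrier (mult_of K) = {a [^]\<^bsub>K\<^esub> i | i::nat. i \<in> UNIV}"
    by (rule bexE)
  have pw: "a [^]\<^bsub>K\<^esub> i = a ^ i" for i :: nat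
    by (induction i) (simp_all add: K_def)
  show ?thesis
  proof (intro exI[of _ a] allI impI)
    fix x :: 'a assume "x \<noteq> 0"
    hence "x \<in> carrier (mult_of K)" by (simp add: K_def)
    hence "x \<in> {a [^]\<^bsub>K\<^esub> i | i::nat. i \<in> UNIV}" unfolding a2 .
    hence "\<exists>i::nat. x = a [^]\<^bsub>K\<^esub> i" by auto
    thus "\<exists>i. x = a ^ i" using pw by simp
  qed
qed

definition evp :: "'a::comm_ring_1 \<Rightarrow> int poly \<Rightarrow> 'a" where
  "evp x g = poly (map_poly of_int g) x"

lemma evp_add: "evp x (f + g) = evp x f + evp x g" by (simp add: evp_def mpi_add)
lemma evp_diff: "evp x (f - g) = evp x f - evp x g" by (simp add: evp_def mpi_diff)
lemma evp_mult: "evp x (f * g) = evp x f * evp x g" by (simp add: evp_def mpi_mult)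
lemma evp_1: "evp x 1 = 1" by (simp add: evp_def)
lemma evp_0: "evp x 0 = 0" by (simp add: evp_def)
lemma evp_monom: "evp x (monom c n) = of_int c * x ^ n" by (simp add: evp_def mpi_monom poly_monom)

lemma evp_sum:
  assumes "degree g \<le> N"
  shows "evp x g = (\<Sum>i\<le>N. of_int (coeff g i) * x ^ i)"
  unfolding evp_def
  by (subst poly_sum_N[where N=N]) (auto simp: coeff_mpi intro: order_trans[OF degree_mpi_le assms])

lemma evp_zero_coeffs:
  fixes x :: "'a::comm_ring_1"
  assumes "\<And>i. int CHAR('a) dvd coeff r i"
  shows "map_poly (of_int :: int \<Rightarrow> 'a) r = 0"
proof (rule poly_eqI)
  fix i
  show "coeff (map_poly (of_int :: int \<Rightarrow> 'a) r) i = coeff 0 i"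
    using assms[of i] by (simp add: coeff_mpi of_int_eq_0_iff_char_dvd)
qed

lemma KL:
  fixes \<alpha> :: "'r::{field,finite}"
  assumes m_min: "\<And>g. lead_coeff g = 1 \<Longrightarrow> evp \<alpha> g = 0 \<Longrightarrow> degree m \<le> degree g"
  and r0: "evp \<alpha> r = 0" and rdeg: "degree r < degree m"
  shows "int CHAR('r) dvd coeff r i"
proof (rule ccontr)
  define p where "p = int CHAR('r)"
  have pp: "prime p" unfolding p_def using ff_char_prime[where 'a='r] by simp
  assume "\<not> int CHAR('r) dvd coeff r i"
  hence ni: "\<not> p dvd coeff r i" by (simp add: p_def)
  define D where "D = {i. \<not> p dvd coeff r i}"
  have Dsub: "D \<subseteq> {..degree r}"
    by (auto simp: D_def coeff_eq_0 intro: ccontr)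
  hence finD: "finite D" by (rule finite_subset) simp
  have "i \<in> D" using ni by (simp add: D_def)
  hence Dne: "D \<noteq> {}" by blast
  define d where "d = Max D"
  have dD: "d \<in> D" unfolding d_def using finD Dne by (rule Max_in)
  have above: "p dvd coeff r j" if "j > d" for j
  proof (rule ccontr)
    assume "\<not> p dvd coeff r j"
    hence "j \<in> D" by (simp add: D_def)
    hence "j \<le> d" unfolding d_def by (rule Max_ge[OF finD])
    thus False using that by simp
  qed
  have dr: "d \<le> degree r" using dD Dsub by auto
  have "coprime p (coeff r d)" using dD by (intro prime_imp_coprime[OF pp]) (simp add: D_def)
  hence "coprime (coeff r d) p" using coprime_commute by blast
  then obtain c where c: "[coeff r d * c = 1] (mod p)" using cong_solve_coprime_int by blast
  have c1: "(of_int (coeff r d * c) :: 'r) = 1"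
    using c unfolding p_def by (simp add: of_int_eq_iff_cong_CHAR[where x="coeff r d * c" and y=1, simplified])
  define t where "t = Poly (map (\<lambda>i. if i = d then 1 else c * coeff r i) [0..<Suc d])"
  have ct: "coeff t i = (if i \<le> d then (if i = d then 1 else c * coeff r i) else 0)" for i
    by (simp add: t_def nth_default_def del: upt_Suc)
  have dt: "degree t = d"
  proof (rule antisym)
    show "degree t \<le> d" by (rule degree_le) (simp add: ct)
    show "d \<le> degree t" by (rule le_degree) (simp add: ct)
  qed
  have lt: "lead_coeff t = 1" using dt ct by simp
  have "evp \<alpha> t = (\<Sum>i\<le>degree r. of_int (coeff t i) * \<alpha> ^ i)"
    using dt dr by (intro evp_sum) simp
  also have "\<dots> = (\<Sum>i\<le>degree r. of_int c * (of_int (coeff r i) * \<alpha> ^ i))"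
  proof (rule sum.cong[OF refl])
    fix i assume "i \<in> {..degree r}"
    have "(of_int (coeff t i) :: 'r) = of_int c * of_int (coeff r i)"
    proof (cases "i \<le> d")
      case True
      thus ?thesis using c1 by (cases "i = d") (auto simp: ct mult.commute)
    next
      case False
      hence "p dvd coeff r i" using above by simp
      hence "(of_int (coeff r i) :: 'r) = 0" unfolding p_def by (simp add: of_int_eq_0_iff_char_dvd)
      thus ?thesis using False by (simp add: ct)
    qed
    thus "of_int (coeff t i) * \<alpha> ^ i = of_int c * (of_int (coeff r i) * \<alpha> ^ i)" by simp
  qed
  also have "\<dots> = of_int c * evp \<alpha> r"
    by (simp add: evp_sum[of r "degree r"] sum_distrib_left)
  finally have "evp \<alpha> t = 0" using r0 by simp
  from m_min[OF lt this] show False using dt dr rdeg by simp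
qed

lemma ff_iso_card:
  assumes card_eq: "card (UNIV::'r::{field,finite} set) = card (UNIV::'s::{field,finite} set)"
  shows "\<exists>\<phi>::'r\<Rightarrow>'s. bij \<phi> \<and> (\<forall>x y. \<phi> (x + y) = \<phi> x + \<phi> y) \<and> (\<forall>x y. \<phi> (x * y) = \<phi> x * \<phi> y) \<and> \<phi> 1 = 1"
proof -
  define q where "q = card (UNIV::'r set)"
  have q2: "q \<ge> 2" unfolding q_def by (rule card_ge2)
  have charEq: "CHAR('r) = CHAR('s)" using card_eq by (rule ff_char_eq)
  obtain \<alpha> :: 'r where gen: "\<forall>x. x \<noteq> 0 \<longrightarrow> (\<exists>i. x = \<alpha> ^ i)" using ff_gen by blast
  define g0 :: "int poly" where "g0 = monom 1 q - monom 1 1"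
  have cg0: "coeff g0 i = (if i = q then 1 else if i = 1 then -1 else 0)" for i
    using q2 by (simp add: g0_def coeff_monom)
  have dg0: "degree g0 = q"
  proof (rule antisym)
    show "degree g0 \<le> q" using q2 by (intro degree_le) (simp add: cg0)
    show "q \<le> degree g0" by (rule le_degree) (simp add: cg0)
  qed
  have lg0: "lead_coeff g0 = 1" using dg0 cg0 by simp
  have evg0: "evp x g0 = x ^ q - x" for x :: "'a::comm_ring_1"
    using q2 by (simp add: g0_def evp_diff evp_monom)
  have g0R: "evp \<alpha> g0 = 0" using ff_pow_card[of \<alpha>] by (simp add: evg0 q_def)
  define P where "P n \<longleftrightarrow> (\<exists>g. lead_coeff g = 1 \<and> evp \<alpha> g = 0 \<and> degree g = n)" for n
  have "P q" unfolding P_def using lg0 g0R dg0 by blast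
  hence "P (LEAST n. P n)" by (rule LeastI)
  then obtain m where m1: "lead_coeff m = 1" and m0: "evp \<alpha> m = 0" and mdeg: "degree m = (LEAST n. P n)"
    unfolding P_def by blast
  have m_min: "degree m \<le> degree g" if "lead_coeff g = 1" "evp \<alpha> g = 0" for g
    unfolding mdeg by (rule Least_le) (use that in \<open>auto simp: P_def\<close>)
  have mnz: "m \<noteq> 0" using m1 by auto
  have dm1: "degree m \<ge> 1"
  proof (rule ccontr)
    assume "\<not> degree m \<ge> 1"
    hence "degree m = 0" by simp
    hence "evp \<alpha> m = of_int (coeff m 0)" by (simp add: evp_sum[of m 0])
    also have "coeff m 0 = 1" using m1 \<open>degree m = 0\<close> by simp
    finally show False using m0 by simp
  qed
  have divm: "\<exists>u r. g = m * u + r \<and> (r = 0 \<or> degree r < degree m)" for g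
  proof -
    obtain u r where "pseudo_divmod g m = (u, r)" by (cases "pseudo_divmod g m") auto
    from pseudo_divmod[OF mnz this] m1 show ?thesis by auto
  qed
  have kerR: "int CHAR('r) dvd coeff r i" if "evp \<alpha> g = 0" "g = m * u + r" "r = 0 \<or> degree r < degree m" for g u r i
  proof (cases "r = 0")
    case True thus ?thesis by simp
  next
    case False
    have "evp \<alpha> r = 0" using that m0 by (simp add: evp_add evp_mult)
    thus ?thesis using False that(3) by (intro KL[where \<alpha>=\<alpha> and m=m]) (auto intro: m_min)
  qed
  have mapS0: "map_poly (of_int :: int \<Rightarrow> 's) r = 0" if "\<And>i. int CHAR('r) dvd coeff r i" for r
    by (rule evp_zero_coeffs) (use that charEq in auto)
  obtain u0 r0 where ur0: "g0 = m * u0 + r0" "r0 = 0 \<or> degree r0 < degree m" using divm by blast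
  have r0S: "map_poly (of_int :: int \<Rightarrow> 's) r0 = 0"
    by (rule mapS0) (rule kerR[OF g0R ur0])
  have "\<exists>\<beta>::'s. evp \<beta> m = 0"
  proof (rule ccontr)
    assume nor: "\<not> (\<exists>\<beta>::'s. evp \<beta> m = 0)"
    define mS where "mS = map_poly (of_int :: int \<Rightarrow> 's) m"
    define uS where "uS = map_poly (of_int :: int \<Rightarrow> 's) u0"
    define gS where "gS = map_poly (of_int :: int \<Rightarrow> 's) g0"
    have gSeq: "gS = mS * uS" unfolding gS_def mS_def uS_def using ur0(1) r0S
      by (simp add: mpi_add mpi_mult)
    have cgS: "coeff gS q = 1" by (simp add: gS_def coeff_mpi cg0)
    have dgS: "degree gS = q"
    proof (rule antisym)
      show "degree gS \<le> q" unfolding gS_def using degree_mpi_le[of g0] dg0 by simp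
      show "q \<le> degree gS" by (rule le_degree) (simp add: cgS)
    qed
    have cmS: "coeff mS (degree m) = 1" using m1 by (simp add: mS_def coeff_mpi)
    have dmS: "degree mS \<ge> degree m" by (rule le_degree) (simp add: cmS)
    have mSnz: "mS \<noteq> 0" using cmS by auto
    have gSnz: "gS \<noteq> 0" using cgS by auto
    hence uSnz: "uS \<noteq> 0" using gSeq by auto
    have "degree gS = degree mS + degree uS" using gSeq degree_mult_eq[OF mSnz uSnz] by simp
    hence duS: "degree uS < q" using dgS dmS dm1 by simp
    have roots: "poly uS b = 0" for b :: 's
    proof -
      have "poly gS b = b ^ q - b" using evg0[of b] by (simp add: evp_def gS_def)
      also have "\<dots> = 0" using ff_pow_card[of b] card_eq by (simp add: q_def)
      finally have "poly mS b * poly uS b = 0" using gSeq by simp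
      moreover have "poly mS b \<noteq> 0" using nor by (simp add: evp_def mS_def)
      ultimately show ?thesis by simp
    qed
    have "card {b::'s. poly uS b = 0} \<le> degree uS" by (rule card_poly_roots_bound[OF uSnz])
    moreover have "{b::'s. poly uS b = 0} = UNIV" using roots by auto
    ultimately show False using duS card_eq by (simp add: q_def)
  qed
  then obtain \<beta> :: 's where b0: "evp \<beta> m = 0" by blast
  have kerS: "evp \<beta> g = 0" if "evp \<alpha> g = 0" for g
  proof -
    obtain u r where ur: "g = m * u + r" "r = 0 \<or> degree r < degree m" using divm by blast
    have "map_poly (of_int :: int \<Rightarrow> 's) r = 0" by (rule mapS0) (rule kerR[OF that ur])
    hence "evp \<beta> r = 0" by (simp add: evp_def)
    thus ?thesis using ur(1) b0 by (simp add: evp_add evp_mult)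
  qed
  have surjR: "\<exists>g. evp \<alpha> g = x" for x
  proof (cases "x = 0")
    case True thus ?thesis by (intro exI[of _ 0]) (simp add: evp_0)
  next
    case False
    then obtain i where "x = \<alpha> ^ i" using gen by blast
    thus ?thesis by (intro exI[of _ "monom 1 i"]) (simp add: evp_monom)
  qed
  define \<phi> where "\<phi> x = evp \<beta> (SOME g. evp \<alpha> g = x)" for x
  have phi_ev: "\<phi> (evp \<alpha> g) = evp \<beta> g" for g
  proof -
    define g' where "g' = (SOME h. evp \<alpha> h = evp \<alpha> g)"
    have "evp \<alpha> g' = evp \<alpha> g" unfolding g'_def by (rule someI_ex) blast
    hence "evp \<alpha> (g' - g) = 0" by (simp add: evp_diff)
    hence "evp \<beta> (g' - g) = 0" by (rule kerS)
    hence "evp \<beta> g' = evp \<beta> g" by (simp add: evp_diff)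
    thus ?thesis by (simp add: \<phi>_def g'_def)
  qed
  have add: "\<phi> (x + y) = \<phi> x + \<phi> y" for x y
  proof -
    obtain g where g: "evp \<alpha> g = x" using surjR[of x] by (rule exE)
    obtain h where h: "evp \<alpha> h = y" using surjR[of y] by (rule exE)
    note gh = g[symmetric] h[symmetric]
    from gh show ?thesis by (simp add: evp_add[symmetric] phi_ev)
  qed
  have mul: "\<phi> (x * y) = \<phi> x * \<phi> y" for x y
  proof -
    obtain g where g: "evp \<alpha> g = x" using surjR[of x] by (rule exE)
    obtain h where h: "evp \<alpha> h = y" using surjR[of y] by (rule exE)
    note gh = g[symmetric] h[symmetric]
    from gh show ?thesis by (simp add: evp_mult[symmetric] phi_ev)
  qed
  have one: "\<phi> 1 = 1" using phi_ev[of 1] by (simp add: evp_1)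
  have inj: "inj \<phi>"
  proof (rule injI, rule ccontr)
    fix x y assume eq: "\<phi> x = \<phi> y" and ne: "x \<noteq> y"
    define z where "z = x - y"
    have zne: "z \<noteq> 0" using ne by (simp add: z_def)
    have "\<phi> x = \<phi> z + \<phi> y" using add[of z y] by (simp add: z_def)
    hence pz: "\<phi> z = 0" using eq by simp
    have "1 = \<phi> (z * inverse z)" using zne one by simp
    also have "\<dots> = 0" using mul pz by simp
    finally show False by simp
  qed
  have "card (range \<phi>) = card (UNIV :: 's set)" using card_image[OF inj] card_eq by simp
  hence "range \<phi> = UNIV" by (intro card_subset_eq) auto
  hence "bij \<phi>" using inj by (simp add: bij_def)
  thus ?thesis using add mul one by blast
qed


theorem mainTheorem6:
  assumes "commuting_graph_iso (upper_tri :: (('r::{field,finite}) ^ 2 ^ 2) set)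
                               (upper_tri :: (('s::{field,finite}) ^ 2 ^ 2) set)"
  shows "ring_isomorphic TYPE('r) TYPE('s)"
proof -
  obtain f where f: "bij_betw f (cg_vertices (upper_tri :: ('r ^ 2 ^ 2) set)) (cg_vertices (upper_tri :: ('s ^ 2 ^ 2) set))"
    using assms unfolding commuting_graph_iso_def by blast
  have "card (cg_vertices (upper_tri :: ('r ^ 2 ^ 2) set)) = card (cg_vertices (upper_tri :: ('s ^ 2 ^ 2) set))"
    using bij_betw_same_card[OF f] .
  hence "card (UNIV :: 'r set) ^ 3 - card (UNIV :: 'r set) = card (UNIV :: 's set) ^ 3 - card (UNIV :: 's set)"
    by (simp add: card_vertices)
  moreover have "card (UNIV :: 'r set) \<ge> 1" "card (UNIV :: 's set) \<ge> 1"
    using card_ge2[where 'a='r] card_ge2[where 'a='s] by auto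
  ultimately have "card (UNIV :: 'r set) = card (UNIV :: 's set)" using cube_inj by blast
  from ff_iso_card[OF this] show ?thesis unfolding ring_isomorphic_def by blast
qed

end
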